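(* Let $I=(p_t)_{t\in[n]}$ be an instance and $\hat I=(\hat p_t)_{t\in[n]}$ a prediction such that $\min\{p_t,\hat p_t\}>0$ for some $t$. Then (Lipschitzness) $|\mathrm{opt}(I)-\mathrm{opt}(\hat I)|\le\eta(I,\hat I)$, and (monotonicity) for every $S\subseteq[n]$, letting $\hat I_S$ be the instance with $t$-th entry $p_t$ for $t\in S$ and $\hat p_t$ for $t\notin S$, we have $\eta(I,\hat I)\ge\eta(I,\hat I_S)$.
   Context: Fix a real parameter $d>0$. An instance is a finite sequence $I=(p_t)_{t\in[T]}$ of nonnegative reals; instances of different lengths are compared by padding with zeros. A solution is a finite set $X=\{x_1<\dots<x_k\}\subseteq[T]$; it is feasible for $I$ if either all $p_t=0$, or $X\ne\emptyset$ and $\max X\ge\max\{t:p_t>0\}$. With $x_0:=0$, $F(I,X)=|X|+\frac1d\sum_{i=1}^{k}\sum_{t=x_{i-1}+1}^{x_i}p_t(x_i-t)$, and $\mathrm{opt}(I)=\min\{F(I,X): X\text{ feasible}\}$. For $a\le b$, the subinstance $I\langle a,b\rangle=(p_t)_{t\in\{a,\dots,b\}}$ is an instance on time set $\{a,\dots,b\}$ (solutions are subsets of $\{a,\dots,b\}$, cost formula with $x_0:=a-1$). For an actual instance $I=(p_t)$ and a predicted instance $\hat I=(\hat p_t)$ on the same time set, $O(I,\hat I)=(\max\{p_t,\hat p_t\})_t$ and $U(I,\hat I)=(\min\{p_t,\hat p_t\})_t$. For an interval $L=\{a,\dots,b\}$, $\tau(L,I,\hat I)=\mathrm{opt}(O(I\langle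 a,b\rangle,\hat I\langle a,b\rangle))-\mathrm{opt}(U(I\langle a,b\rangle,\hat I\langle a,b\rangle))$. A partition of $[n]$ into consecutive intervals $L_1,\dots,L_m$ is non-empty for $U(I,\hat I)$ if every $L_i$ contains some $t$ with $\min\{p_t,\hat p_t\}>0$; let $\Pi(U(I,\hat I))$ be the set of such partitions. The error measure is $\eta(I,\hat I)=\max_{\mathcal P\in\Pi(U(I,\hat I))}\sum_{L\in\mathcal P}\tau(L,I,\hat I)$. *)

theory Defs
  imports Complex_Main
begin

text \<open>An instance on the time set {a..b} is a function p :: nat \<Rightarrow> real
  (only its values on {a..b} matter). A solution is a set X \<subseteq> {a..b}.\<close>

definition feasible :: "nat \<Rightarrow> nat \<Rightarrow> (nat \<Rightarrow> real) \<Rightarrow> nat set \<Rightarrow> bool" where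
  "feasible a b p X \<longleftrightarrow> X \<subseteq> {a..b} \<and>
     ((\<forall>t\<in>{a..b}. p t = 0) \<or>
      (X \<noteq> {} \<and> (\<forall>t\<in>{a..b}. p t > 0 \<longrightarrow> t \<le> Max X)))"

definition cost :: "real \<Rightarrow> nat \<Rightarrow> nat \<Rightarrow> (nat \<Rightarrow> real) \<Rightarrow> nat set \<Rightarrow> real" where
  "cost d a b p X = real (card X) + (1 / d) *
     (\<Sum>t\<in>{t\<in>{a..b}. \<exists>x\<in>X. t \<le> x}. p t * (real (Min {x\<in>X. t \<le> x}) - real t))"

definition opt :: "real \<Rightarrow> nat \<Rightarrow> nat \<Rightarrow> (nat \<Rightarrow> real) \<Rightarrow> real" where
  "opt d a b p = Min (cost d a b p ` {X. feasible a b p X})"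

definition Oinst :: "(nat \<Rightarrow> real) \<Rightarrow> (nat \<Rightarrow> real) \<Rightarrow> nat \<Rightarrow> real" where
  "Oinst p q = (\<lambda>t. max (p t) (q t))"

definition Uinst :: "(nat \<Rightarrow> real) \<Rightarrow> (nat \<Rightarrow> real) \<Rightarrow> nat \<Rightarrow> real" where
  "Uinst p q = (\<lambda>t. min (p t) (q t))"

definition tau :: "real \<Rightarrow> nat set \<Rightarrow> (nat \<Rightarrow> real) \<Rightarrow> (nat \<Rightarrow> real) \<Rightarrow> real" where
  "tau d L p q = opt d (Min L) (Max L) (Oinst p q) - opt d (Min L) (Max L) (Uinst p q)"

definition interval_partition :: "nat \<Rightarrow> nat set set \<Rightarrow> bool" where
  "interval_partition n P \<longleftrightarrow>
     (\<forall>L\<in>P. \<exists>a b. a \<le> b \<and> L = {a..b}) \<and> \<Union>P = {1..n} \<and>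
     (\<forall>L\<in>P. \<forall>L'\<in>P. L \<noteq> L' \<longrightarrow> L \<inter> L' = {})"

definition nonempty_partitions :: "nat \<Rightarrow> (nat \<Rightarrow> real) \<Rightarrow> nat set set set" where
  "nonempty_partitions n u = {P. interval_partition n P \<and> (\<forall>L\<in>P. \<exists>t\<in>L. u t > 0)}"

definition eta :: "real \<Rightarrow> nat \<Rightarrow> (nat \<Rightarrow> real) \<Rightarrow> (nat \<Rightarrow> real) \<Rightarrow> real" where
  "eta d n p q = Max ((\<lambda>P. \<Sum>L\<in>P. tau d L p q) ` nonempty_partitions n (Uinst p q))"

end

theory Submission
  imports Defs
begin


lemma Min_ival[simp]: "(a::nat) \<le> b \<Longrightarrow> Min {a..b} = a"
  by (rule Min_eqI) auto
lemma Max_ival[simp]: "(a::nat) \<le> b \<Longrightarrow> Max {a..b} = b"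
  by (rule Max_eqI) auto

lemma feasible_all: "feasible a b p {a..b}"
proof (cases "\<forall>t\<in>{a..b}. p t = 0")
  case True then show ?thesis by (simp add: feasible_def)
next
  case False
  then obtain t where "t \<in> {a..b}" by auto
  then show ?thesis unfolding feasible_def
    by (auto intro!: Max_ge)
qed

lemma finite_feas: "finite {X. feasible a b p X}"
  by (rule finite_subset[of _ "Pow {a..b}"]) (auto simp: feasible_def)

lemma opt_le: "feasible a b p X \<Longrightarrow> opt d a b p \<le> cost d a b p X"
  unfolding opt_def by (rule Min_le) (auto intro: finite_feas)

lemma opt_attained: "\<exists>X. feasible a b p X \<and> opt d a b p = cost d a b p X"
proof -
  have "opt d a b p \<in> cost d a b p ` {X. feasible a b p X}"
    unfolding opt_def by (intro Min_in) (use finite_feas feasible_all in blast)+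
  then show ?thesis by auto
qed

lemma Min_up:
  assumes "finite X" "\<exists>x\<in>X. t \<le> x"
  shows "t \<le> Min {x\<in>X. t \<le> x} \<and> Min {x\<in>X. t \<le> x} \<in> X"
proof -
  have "Min {x\<in>X. t \<le> x} \<in> {x\<in>X. t \<le> x}" using assms by (intro Min_in) auto
  then show ?thesis by auto
qed

lemma feas_sub: "feasible a b p X \<Longrightarrow> X \<subseteq> {a..b}"
  by (simp add: feasible_def)

lemma cost_mono:
  assumes "d > 0" "X \<subseteq> {a..b}" "\<forall>t\<in>{a..b}. p t \<le> p' t"
  shows "cost d a b p X \<le> cost d a b p' X"
proof -
  have fX: "finite X" using assms(2) finite_subset by blast
  have "(\<Sum>t\<in>{t\<in>{a..b}. \<exists>x\<in>X. t \<le> x}. p t * (real (Min {x\<in>X. t \<le> x}) - real t))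
     \<le> (\<Sum>t\<in>{t\<in>{a..b}. \<exists>x\<in>X. t \<le> x}. p' t * (real (Min {x\<in>X. t \<le> x}) - real t))"
  proof (rule sum_mono)
    fix t assume t: "t \<in> {t\<in>{a..b}. \<exists>x\<in>X. t \<le> x}"
    then have "t \<le> Min {x\<in>X. t \<le> x}" using Min_up[OF fX] by auto
    moreover have "p t \<le> p' t" using t assms(3) by auto
    ultimately show "p t * (real (Min {x\<in>X. t \<le> x}) - real t) \<le> p' t * (real (Min {x\<in>X. t \<le> x}) - real t)"
      by (intro mult_right_mono) auto
  qed
  then show ?thesis unfolding cost_def using assms(1) by (simp add: divide_right_mono)
qed

lemma cost_ge_card:
  assumes "d > 0" "X \<subseteq> {a..b}" "\<forall>t\<in>{a..b}. p t \<ge> 0"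
  shows "real (card X) \<le> cost d a b p X"
  using cost_mono[OF assms(1,2), of "\<lambda>_. 0" p] assms(3) by (simp add: cost_def)

lemma opt_mono:
  assumes "d > 0" "\<forall>t\<in>{a..b}. 0 \<le> p t \<and> p t \<le> p' t"
  shows "opt d a b p \<le> opt d a b p'"
proof -
  obtain X where X: "feasible a b p' X" "opt d a b p' = cost d a b p' X" using opt_attained by blast
  have h1: "\<forall>t\<in>{a..b}. p t > 0 \<longrightarrow> p' t > 0" using assms(2) by force
  have h2: "(\<forall>t\<in>{a..b}. p' t = 0) \<longrightarrow> (\<forall>t\<in>{a..b}. p t = 0)"
    using assms(2) by (metis order_antisym)
  have "feasible a b p X" using X(1) h1 h2 unfolding feasible_def by blast
  then have "opt d a b p \<le> cost d a b p X" by (rule opt_le)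
  also have "\<dots> \<le> cost d a b p' X" using cost_mono[OF assms(1) feas_sub[OF X(1)]] assms(2) by auto
  finally show ?thesis using X(2) by simp
qed

lemma opt_ge1:
  assumes "d > 0" "\<forall>t\<in>{a..b}. 0 \<le> p t" "t0 \<in> {a..b}" "p t0 > 0"
  shows "1 \<le> opt d a b p"
proof -
  obtain X where X: "feasible a b p X" "opt d a b p = cost d a b p X" using opt_attained by blast
  have "X \<noteq> {}" using X(1) assms(3,4) unfolding feasible_def by auto
  moreover have "finite X" using feas_sub[OF X(1)] finite_subset by blast
  ultimately have "1 \<le> card X" by (simp add: Suc_leI card_gt_0_iff)
  then show ?thesis using cost_ge_card[OF assms(1) feas_sub[OF X(1)] assms(2)] X(2) by simp
qed

lemma opt_zero_ext:
  assumes "a \<le> a'" "c' \<le> c" "\<forall>t\<in>{a..c} - {a'..c'}. p t = 0"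
  shows "opt d a c p \<le> opt d a' c' p"
proof -
  obtain X where X: "feasible a' c' p X" "opt d a' c' p = cost d a' c' p X" using opt_attained by blast
  have sub: "X \<subseteq> {a'..c'}" using feas_sub[OF X(1)] .
  have "feasible a c p X"
  proof (cases "\<forall>t\<in>{a'..c'}. p t = 0")
    case True then show ?thesis using sub assms unfolding feasible_def by auto
  next
    case False
    then have "X \<noteq> {} \<and> (\<forall>t\<in>{a'..c'}. p t > 0 \<longrightarrow> t \<le> Max X)" using X(1) unfolding feasible_def by auto
    then show ?thesis using sub assms unfolding feasible_def by fastforce
  qed
  then have "opt d a c p \<le> cost d a c p X" by (rule opt_le)
  also have "cost d a c p X = cost d a' c' p X"
  proof -
    have "(\<Sum>t\<in>{t\<in>{a..c}. \<exists>x\<in>X. t \<le> x}. p t * (real (Min {x\<in>X. t \<le> x}) - real t))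
      = (\<Sum>t\<in>{t\<in>{a'..c'}. \<exists>x\<in>X. t \<le> x}. p t * (real (Min {x\<in>X. t \<le> x}) - real t))"
      by (rule sum.mono_neutral_right) (use assms in auto)
    then show ?thesis by (simp add: cost_def)
  qed
  finally show ?thesis using X(2) by simp
qed



lemma opt_split:
  assumes d: "d > 0" and ab: "a \<le> b" and bc: "b < c" and nn: "\<forall>t\<in>{a..c}. p t \<ge> 0"
    and t0: "t0 \<in> {Suc b..c}" "p t0 > 0"
  shows "opt d a b p + opt d (Suc b) c p \<le> opt d a c p + 1"
proof -
  obtain X where X: "feasible a c p X" "opt d a c p = cost d a c p X" using opt_attained by blast
  have Xsub: "X \<subseteq> {a..c}" using feas_sub[OF X(1)] .
  have fX: "finite X" using Xsub finite_subset by blast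
  have t0ac: "t0 \<in> {a..c}" using t0 ab by auto
  have Xne: "X \<noteq> {}" and Xmax: "\<forall>t\<in>{a..c}. p t > 0 \<longrightarrow> t \<le> Max X"
    using X(1) t0ac t0(2) unfolding feasible_def by auto
  have MX: "Max X \<in> X" using fX Xne by (rule Max_in)
  have t0M: "t0 \<le> Max X" using Xmax t0ac t0(2) by auto
  define X1 where "X1 = insert b (X \<inter> {a..b})"
  define X2 where "X2 = X \<inter> {Suc b..c}"
  have fX1: "finite X1" unfolding X1_def using fX by simp
  have fX2: "finite X2" unfolding X2_def using fX by simp
  have "Max X \<le> c" using MX Xsub by auto
  moreover have "Suc b \<le> t0" using t0(1) by (rule atLeastAtMost_iff[THEN iffD1, THEN conjunct1])
  then have sbM: "Suc b \<le> Max X" using t0M by (rule order.trans)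
  ultimately have MX2: "Max X \<in> X2" using MX unfolding X2_def by simp
  have bX1: "b \<in> X1" unfolding X1_def by simp
  have X1sub: "X1 \<subseteq> {a..b}" unfolding X1_def using ab by auto
  have bM: "b \<le> Max X1" using fX1 bX1 by (rule Max_ge)
  have "\<forall>t\<in>{a..b}. t \<le> Max X1" using bM by auto
  then have f1: "feasible a b p X1"
    unfolding feasible_def using X1sub bX1 by blast
  have f2: "feasible (Suc b) c p X2"
  proof -
    have "\<forall>t\<in>{Suc b..c}. p t > 0 \<longrightarrow> t \<le> Max X2"
    proof (intro ballI impI)
      fix t assume "t \<in> {Suc b..c}" "p t > 0"
      then have "t \<le> Max X" using Xmax ab by auto
      also have "Max X \<le> Max X2" using fX2 MX2 by (rule Max_ge)
      finally show "t \<le> Max X2" .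
    qed
    then show ?thesis unfolding feasible_def using MX2 by (auto simp: X2_def)
  qed
  have card1: "card X1 \<le> card (X \<inter> {a..b}) + 1"
    unfolding X1_def using fX by (simp add: card_insert_if)
  have cardX: "card X = card (X \<inter> {a..b}) + card X2"
  proof -
    have "X = (X \<inter> {a..b}) \<union> X2" using Xsub unfolding X2_def by auto
    moreover have "(X \<inter> {a..b}) \<inter> X2 = {}" unfolding X2_def by auto
    moreover have "card ((X \<inter> {a..b}) \<union> X2) = card (X \<inter> {a..b}) + card X2"
      using fX fX2 \<open>(X \<inter> {a..b}) \<inter> X2 = {}\<close> by (intro card_Un_disjoint) auto
    ultimately show ?thesis by simp
  qed
  define w where "w Y t = p t * (real (Min {x\<in>Y. t \<le> x}) - real t)" for Y t
  define S1 where "S1 = {t\<in>{a..b}. \<exists>x\<in>X. t \<le> x}"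
  define S2 where "S2 = {t\<in>{Suc b..c}. \<exists>x\<in>X. t \<le> x}"
  have SS: "{t\<in>{a..c}. \<exists>x\<in>X. t \<le> x} = S1 \<union> S2" using ab bc unfolding S1_def S2_def by auto
  have WX: "(\<Sum>t\<in>{t\<in>{a..c}. \<exists>x\<in>X. t \<le> x}. w X t) = (\<Sum>t\<in>S1. w X t) + (\<Sum>t\<in>S2. w X t)"
    unfolding SS by (rule sum.union_disjoint) (auto simp: S1_def S2_def)
  have S1eq: "{t\<in>{a..b}. \<exists>x\<in>X1. t \<le> x} = S1"
  proof -
    have "S1 = {a..b}" unfolding S1_def using MX sbM by (auto intro!: bexI[of _ "Max X"])
    moreover have "{t\<in>{a..b}. \<exists>x\<in>X1. t \<le> x} = {a..b}" unfolding X1_def by auto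
    ultimately show ?thesis by simp
  qed
  have S2eq: "{t\<in>{Suc b..c}. \<exists>x\<in>X2. t \<le> x} = S2"
    unfolding S2_def X2_def using Xsub apply auto
    subgoal for x xa by (intro bexI[of _ xa]) auto
    done
  have W1: "(\<Sum>t\<in>S1. w X1 t) \<le> (\<Sum>t\<in>S1. w X t)"
  proof (rule sum_mono)
    fix t assume tS: "t \<in> S1"
    then have ex: "\<exists>x\<in>X. t \<le> x" and tab: "t \<in> {a..b}" unfolding S1_def by auto
    define m where "m = Min {x\<in>X. t \<le> x}"
    have m: "t \<le> m" "m \<in> X" using Min_up[OF fX ex] unfolding m_def by auto
    have ex1: "\<exists>x\<in>X1. t \<le> x" using tab unfolding X1_def by auto
    have "Min {x\<in>X1. t \<le> x} \<le> m"
    proof (cases "m \<le> b")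
      case True
      then have "m \<in> {x\<in>X1. t \<le> x}" using m tab unfolding X1_def by auto
      then show ?thesis using fX1 by (intro Min_le) auto
    next
      case False
      have "b \<in> {x\<in>X1. t \<le> x}" using tab unfolding X1_def by auto
      then have "Min {x\<in>X1. t \<le> x} \<le> b" using fX1 by (intro Min_le) auto
      then show ?thesis using False by simp
    qed
    moreover have "p t \<ge> 0" using nn tab bc by auto
    ultimately show "w X1 t \<le> w X t" unfolding w_def m_def
      by (intro mult_left_mono) auto
  qed
  have W2: "(\<Sum>t\<in>S2. w X2 t) = (\<Sum>t\<in>S2. w X t)"
  proof (rule sum.cong)
    fix t assume "t \<in> S2"
    then have "{x\<in>X2. t \<le> x} = {x\<in>X. t \<le> x}" unfolding S2_def X2_def using Xsub by auto
    then show "w X2 t = w X t" unfolding w_def by simp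
  qed simp
  have Wsum: "(\<Sum>t\<in>S1. w X1 t) + (\<Sum>t\<in>S2. w X2 t) \<le> (\<Sum>t\<in>{t\<in>{a..c}. \<exists>x\<in>X. t \<le> x}. w X t)"
    using W1 W2 WX by simp
  have c1: "cost d a b p X1 = real (card X1) + (1/d) * (\<Sum>t\<in>S1. w X1 t)"
    unfolding cost_def w_def S1eq[symmetric] by simp
  have c2: "cost d (Suc b) c p X2 = real (card X2) + (1/d) * (\<Sum>t\<in>S2. w X2 t)"
    unfolding cost_def w_def S2eq[symmetric] by simp
  have c: "cost d a c p X = real (card X) + (1/d) * (\<Sum>t\<in>{t\<in>{a..c}. \<exists>x\<in>X. t \<le> x}. w X t)"
    unfolding cost_def w_def by simp
  have "(1/d) * ((\<Sum>t\<in>S1. w X1 t) + (\<Sum>t\<in>S2. w X2 t)) \<le> (1/d) * (\<Sum>t\<in>{t\<in>{a..c}. \<exists>x\<in>X. t \<le> x}. w X t)"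
    using Wsum d by (intro mult_left_mono) auto
  then have "cost d a b p X1 + cost d (Suc b) c p X2 \<le> cost d a c p X + 1"
    unfolding c1 c2 c using card1 cardX by (simp add: algebra_simps)
  moreover have "opt d a b p \<le> cost d a b p X1" using f1 by (rule opt_le)
  moreover have "opt d (Suc b) c p \<le> cost d (Suc b) c p X2" using f2 by (rule opt_le)
  ultimately show ?thesis using X(2) by linarith
qed



lemma ip_finite: "interval_partition n P \<Longrightarrow> finite P"
  unfolding interval_partition_def
  by (rule finite_subset[of _ "Pow {1..n}"]) auto

lemma ip_sub: "interval_partition n P \<Longrightarrow> L \<in> P \<Longrightarrow> L \<subseteq> {1..n}"
  unfolding interval_partition_def by blast

lemma ip_ival: "interval_partition n P \<Longrightarrow> L \<in> P \<Longrightarrow> \<exists>a b. a \<le> b \<and> L = {a..b}"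
  unfolding interval_partition_def by blast

lemma ip_disj: "interval_partition n P \<Longrightarrow> A \<in> P \<Longrightarrow> B \<in> P \<Longrightarrow> A \<noteq> B \<Longrightarrow> A \<inter> B = {}"
  unfolding interval_partition_def by blast

lemma merge_step:
  fixes h :: "nat set \<Rightarrow> real"
  assumes IP: "interval_partition n P" and LP: "{x..y} \<in> P" and RP: "{Suc y..z} \<in> P"
    and xy: "x \<le> y" and yz: "y < z"
  defines "P2 \<equiv> insert {x..z} (P - {{x..y}, {Suc y..z}})"
  shows "interval_partition n P2" "card P2 < card P"
    "sum h P - h {x..y} - h {Suc y..z} + h {x..z} = sum h P2"
proof -
  define L where "L = {x..y}"
  define R where "R = {Suc y..z}"
  define K where "K = {x..z}"
  define Q where "Q = P - {L, R}"
  have fP: "finite P" using IP by (rule ip_finite)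
  have LR: "L \<noteq> R" unfolding L_def R_def using xy by (metis atLeastAtMost_iff le_refl not_less_eq_eq)
  have KLR: "K = L \<union> R" unfolding K_def L_def R_def using xy yz by auto
  have KQ: "K \<notin> Q"
  proof
    assume "K \<in> Q"
    then have KP: "K \<in> P" and KL: "K \<noteq> L" unfolding Q_def by auto
    have "x \<in> K \<inter> L" unfolding K_def L_def using xy yz by auto
    then show False using ip_disj[OF IP KP LP[folded L_def] KL] by auto
  qed
  have P2: "P2 = insert K Q" unfolding P2_def K_def Q_def L_def R_def by simp
  show "interval_partition n P2"
    unfolding interval_partition_def
  proof (intro conjI)
    show "\<forall>L'\<in>P2. \<exists>a b. a \<le> b \<and> L' = {a..b}"
      unfolding P2 Q_def K_def using ip_ival[OF IP] xy yz by (auto intro: order.trans[OF _ less_imp_le])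
    have "\<Union>P2 = K \<union> \<Union>Q" unfolding P2 by simp
    also have "\<dots> = \<Union>P" unfolding KLR Q_def using LP RP unfolding L_def R_def by blast
    also have "\<dots> = {1..n}" using IP unfolding interval_partition_def by blast
    finally show "\<Union>P2 = {1..n}" .
    show "\<forall>A\<in>P2. \<forall>B\<in>P2. A \<noteq> B \<longrightarrow> A \<inter> B = {}"
    proof (intro ballI impI)
      fix A B assume A: "A \<in> P2" and B: "B \<in> P2" and AB: "A \<noteq> B"
      have QK: "C \<inter> K = {}" if "C \<in> Q" for C
      proof -
        have "C \<in> P" "C \<noteq> L" "C \<noteq> R" using that unfolding Q_def by auto
        then have "C \<inter> L = {}" "C \<inter> R = {}"
          using ip_disj[OF IP] LP RP unfolding L_def R_def by auto
        then show ?thesis unfolding KLR by auto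
      qed
      show "A \<inter> B = {}"
      proof (cases "A = K")
        case True
        then have "B \<in> Q" using B AB unfolding P2 by auto
        then show ?thesis using QK True by auto
      next
        case False
        then have AQ: "A \<in> Q" using A unfolding P2 by auto
        show ?thesis
        proof (cases "B = K")
          case True then show ?thesis using QK AQ by auto
        next
          case False
          then have "B \<in> Q" using B unfolding P2 by auto
          then show ?thesis using AQ AB ip_disj[OF IP] unfolding Q_def by auto
        qed
      qed
    qed
  qed
  have fQ: "finite Q" unfolding Q_def using fP by simp
  have sub2: "{L, R} \<subseteq> P" using LP RP unfolding L_def R_def by auto
  have cQ: "card Q = card P - 2" unfolding Q_def using sub2 fP LR by (simp add: card_Diff_subset)
  have "card P \<ge> 2" using card_mono[OF fP sub2] LR by simp
  then show "card P2 < card P" unfolding P2 using fQ KQ cQ by simp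
  have "sum h P = sum h (P - {L, R}) + sum h {L, R}" using sum.subset_diff[OF sub2 fP] .
  then have "sum h P = sum h Q + h L + h R" using LR unfolding Q_def by simp
  moreover have "sum h P2 = h K + sum h Q" unfolding P2 using fQ KQ by simp
  ultimately show "sum h P - h {x..y} - h {Suc y..z} + h {x..z} = sum h P2"
    unfolding L_def R_def K_def by simp
qed

lemma partition_merge:
  fixes h :: "nat set \<Rightarrow> real" and f g :: "nat \<Rightarrow> real"
  assumes merge: "\<And>a b c. 1 \<le> a \<Longrightarrow> a \<le> b \<Longrightarrow> b < c \<Longrightarrow> c \<le> n \<Longrightarrow>
        \<exists>t\<in>{a..b}. f t > 0 \<Longrightarrow> \<exists>t\<in>{Suc b..c}. f t > 0 \<Longrightarrow>
        \<not>(\<exists>t\<in>{a..b}. g t > 0) \<or> \<not>(\<exists>t\<in>{Suc b..c}. g t > 0) \<Longrightarrow>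
        h {a..b} + h {Suc b..c} \<le> h {a..c}"
    and good: "\<exists>t\<in>{1..n}. g t > 0"
  shows "interval_partition n P \<Longrightarrow> \<forall>L\<in>P. \<exists>t\<in>L. f t > 0 \<Longrightarrow>
     \<exists>P'. interval_partition n P' \<and> (\<forall>L\<in>P'. \<exists>t\<in>L. g t > 0) \<and> sum h P \<le> sum h P'"
proof (induction "card P" arbitrary: P rule: less_induct)
  case less
  note IP = less.prems(1) and pos = less.prems(2)
  have step: "\<exists>P'. interval_partition n P' \<and> (\<forall>L\<in>P'. \<exists>t\<in>L. g t > 0) \<and> sum h P \<le> sum h P'"
    if LP: "{x..y} \<in> P" and RP: "{Suc y..z} \<in> P" and xy: "x \<le> y" and yz: "y < z"
      and bad: "\<not>(\<exists>t\<in>{x..y}. g t > 0) \<or> \<not>(\<exists>t\<in>{Suc y..z}. g t > 0)" for x y z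
  proof -
    define P2 where "P2 = insert {x..z} (P - {{x..y}, {Suc y..z}})"
    have ms: "interval_partition n P2" "card P2 < card P"
      "sum h P - h {x..y} - h {Suc y..z} + h {x..z} = sum h P2"
      using merge_step[OF IP LP RP xy yz] unfolding P2_def by blast+
    have s1: "{x..y} \<subseteq> {1..n}" "{Suc y..z} \<subseteq> {1..n}" using ip_sub[OF IP LP] ip_sub[OF IP RP] by auto
    then have x1: "1 \<le> x" and zn: "z \<le> n" using xy yz by auto
    have fL: "\<exists>t\<in>{x..y}. f t > 0" and fR: "\<exists>t\<in>{Suc y..z}. f t > 0" using pos LP RP by auto
    have hm: "h {x..y} + h {Suc y..z} \<le> h {x..z}" using merge[OF x1 xy yz zn fL fR bad] .
    have pos2: "\<forall>L\<in>P2. \<exists>t\<in>L. f t > 0"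
    proof -
      have "\<exists>t\<in>{x..z}. f t > 0" using fL yz by auto
      then show ?thesis unfolding P2_def using pos by auto
    qed
    obtain P' where P': "interval_partition n P'" "\<forall>L\<in>P'. \<exists>t\<in>L. g t > 0" "sum h P2 \<le> sum h P'"
      using less.hyps[OF ms(2) ms(1) pos2] by blast
    have "sum h P \<le> sum h P2" using ms(3) hm by linarith
    then show ?thesis using P' by (meson order.trans)
  qed
  show ?case
  proof (cases "\<forall>L\<in>P. \<exists>t\<in>L. g t > 0")
    case True then show ?thesis using IP by blast
  next
    case False
    then obtain L1 where L1P: "L1 \<in> P" and bad: "\<not>(\<exists>t\<in>L1. g t > 0)" by blast
    obtain a b where ab: "a \<le> b" and L1: "L1 = {a..b}" using ip_ival[OF IP L1P] by blast
    have sub: "{a..b} \<subseteq> {1..n}" using ip_sub[OF IP L1P] L1 by simp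
    then have a1: "1 \<le> a" and bn: "b \<le> n" using ab by auto
    have "\<not> (a = 1 \<and> b = n)" using bad good L1 by auto
    then consider "b < n" | "1 < a" using a1 bn by linarith
    then show ?thesis
    proof cases
      case 1
      then have "Suc b \<in> \<Union>P" using IP unfolding interval_partition_def by auto
      then obtain M where MP: "M \<in> P" "Suc b \<in> M" by blast
      obtain a' c where M: "a' \<le> c" "M = {a'..c}" using ip_ival[OF IP MP(1)] by blast
      have "a' = Suc b"
      proof (rule ccontr)
        assume "a' \<noteq> Suc b"
        then have "a' \<le> b" using MP(2) M by auto
        then have "b \<in> M \<inter> L1" using MP(2) M L1 ab by auto
        moreover have "M \<noteq> L1" using MP(2) L1 by auto
        ultimately show False using ip_disj[OF IP MP(1) L1P] by blast
      qed
      then have R: "{Suc b..c} \<in> P" and bc: "b < c" using MP M by auto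
      show ?thesis using step[OF L1P[unfolded L1] R ab bc] bad L1 by blast
    next
      case 2
      define a0 where "a0 = a - 1"
      have aa0: "a = Suc a0" using 2 unfolding a0_def by simp
      have "a0 \<in> \<Union>P" using IP sub 2 ab unfolding interval_partition_def a0_def by auto
      then obtain M where MP: "M \<in> P" "a0 \<in> M" by blast
      obtain a' c where M: "a' \<le> c" "M = {a'..c}" using ip_ival[OF IP MP(1)] by blast
      have "c = a0"
      proof (rule ccontr)
        assume "c \<noteq> a0"
        then have "a \<le> c" using MP(2) M aa0 by auto
        then have "a \<in> M \<inter> L1" using MP(2) M L1 ab aa0 by auto
        moreover have "M \<noteq> L1" using MP(2) L1 aa0 by auto
        ultimately show False using ip_disj[OF IP MP(1) L1P] by blast
      qed
      then have Lm: "{a'..a0} \<in> P" and a'a0: "a' \<le> a0" using MP M by auto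
      have R: "{Suc a0..b} \<in> P" using L1P L1 aa0 by simp
      have "a0 < b" using aa0 ab by simp
      show ?thesis using step[OF Lm R a'a0 \<open>a0 < b\<close>] bad L1 aa0 by blast
    qed
  qed
qed



lemma finite_np: "finite (nonempty_partitions n u)"
  by (rule finite_subset[of _ "Pow (Pow {1..n})"])
     (auto simp: nonempty_partitions_def interval_partition_def)

lemma trivial_np:
  assumes "t \<in> {1..n}" "u t > 0"
  shows "{{1..n}} \<in> nonempty_partitions n u"
  using assms unfolding nonempty_partitions_def interval_partition_def by auto

lemma eta_ge:
  assumes "P \<in> nonempty_partitions n (Uinst p q)"
  shows "(\<Sum>L\<in>P. tau d L p q) \<le> eta d n p q"
  unfolding eta_def using assms finite_np by (intro Max_ge) auto

theorem mainTheorem4: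
  fixes d :: real and n :: nat and p q :: "nat \<Rightarrow> real"
  assumes "d > 0"
    and "\<forall>t\<in>{1..n}. p t \<ge> 0 \<and> q t \<ge> 0"
    and "\<exists>t\<in>{1..n}. min (p t) (q t) > 0"
  shows "\<bar>opt d 1 n p - opt d 1 n q\<bar> \<le> eta d n p q \<and>
         (\<forall>S\<subseteq>{1..n}. eta d n p q \<ge> eta d n p (\<lambda>t. if t \<in> S then p t else q t))"
proof -
  note d = assms(1) and nn = assms(2)
  obtain t1 where t1: "t1 \<in> {1..n}" "min (p t1) (q t1) > 0" using assms(3) by blast
  have n1: "1 \<le> n" using t1 by auto
  define Oq where "Oq = Oinst p q"
  define Uq where "Uq = Uinst p q"
  have OU: "\<forall>t\<in>{1..n}. 0 \<le> Uq t \<and> Uq t \<le> p t \<and> Uq t \<le> q t \<and> p t \<le> Oq t \<and> q t \<le> Oq t"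
    using nn unfolding Oq_def Uq_def Oinst_def Uinst_def by auto
  have part1: "\<bar>opt d 1 n p - opt d 1 n q\<bar> \<le> eta d n p q"
  proof -
    have "opt d 1 n p \<le> opt d 1 n Oq" "opt d 1 n q \<le> opt d 1 n Oq"
      "opt d 1 n Uq \<le> opt d 1 n p" "opt d 1 n Uq \<le> opt d 1 n q"
      using opt_mono[OF d, of 1 n] OU nn by auto
    then have "\<bar>opt d 1 n p - opt d 1 n q\<bar> \<le> tau d {1..n} p q"
      unfolding tau_def using n1 Oq_def Uq_def by simp
    also have "\<dots> = (\<Sum>L\<in>{{1..n}}. tau d L p q)" by simp
    also have "\<dots> \<le> eta d n p q"
      by (rule eta_ge, rule trivial_np[OF t1(1)]) (use t1 in \<open>simp add: Uinst_def\<close>)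
    finally show ?thesis .
  qed
  have part2: "eta d n p q \<ge> eta d n p (\<lambda>t. if t \<in> S then p t else q t)" if S: "S \<subseteq> {1..n}" for S
  proof -
    define r where "r = (\<lambda>t. if t \<in> S then p t else q t)"
    define Or where "Or = Oinst p r"
    define Ur where "Ur = Uinst p r"
    have pw: "\<forall>t\<in>{1..n}. 0 \<le> Or t \<and> Or t \<le> Oq t \<and> 0 \<le> Uq t \<and> Uq t \<le> Ur t \<and> 0 \<le> Ur t \<and> 0 \<le> Oq t"
      using nn unfolding r_def Or_def Ur_def Oq_def Uq_def Oinst_def Uinst_def by auto
    have UrO: "Oq t > 0" if "Ur t > 0" for t
      using that unfolding Ur_def Oq_def Oinst_def Uinst_def by auto
    define h where "h L = (if \<exists>t\<in>L. Uq t > 0 then tau d L p q else opt d (Min L) (Max L) Oq - 1)" for L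
    have tauq: "tau d {a..b} p q = opt d a b Oq - opt d a b Uq" if "a \<le> b" for a b
      using that unfolding tau_def Oq_def Uq_def by simp
    have taur: "tau d {a..b} p r = opt d a b Or - opt d a b Ur" if "a \<le> b" for a b
      using that unfolding tau_def Or_def Ur_def by simp
    have merge: "h {a..b} + h {Suc b..c} \<le> h {a..c}"
      if a1: "1 \<le> a" and ab: "a \<le> b" and bc: "b < c" and cn: "c \<le> n"
        and fL: "\<exists>t\<in>{a..b}. Ur t > 0" and fR: "\<exists>t\<in>{Suc b..c}. Ur t > 0"
        and bad: "\<not>(\<exists>t\<in>{a..b}. Uq t > 0) \<or> \<not>(\<exists>t\<in>{Suc b..c}. Uq t > 0)" for a b c
    proof -
      obtain t0 where t0: "t0 \<in> {Suc b..c}" "Ur t0 > 0" using fR by blast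
      have nnO: "\<forall>t\<in>{a..c}. Oq t \<ge> 0" using pw a1 cn by auto
      have nnU: "\<forall>t\<in>{a..c}. Uq t \<ge> 0" using pw a1 cn by auto
      have spl: "opt d a b Oq + opt d (Suc b) c Oq \<le> opt d a c Oq + 1"
        using opt_split[OF d ab bc nnO t0(1) UrO[OF t0(2)]] .
      have ac: "a \<le> c" "Suc b \<le> c" using ab bc by auto
      consider "\<not>(\<exists>t\<in>{a..b}. Uq t > 0)" "\<not>(\<exists>t\<in>{Suc b..c}. Uq t > 0)"
        | "\<not>(\<exists>t\<in>{a..b}. Uq t > 0)" "\<exists>t\<in>{Suc b..c}. Uq t > 0"
        | "\<exists>t\<in>{a..b}. Uq t > 0" "\<not>(\<exists>t\<in>{Suc b..c}. Uq t > 0)"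
        using bad by blast
      then show ?thesis
      proof cases
        case 1
        then have "\<not>(\<exists>t\<in>{a..c}. Uq t > 0)" using ab by (auto simp: not_less_eq_eq)
        then show ?thesis using 1 spl ab ac unfolding h_def by simp
      next
        case 2
        then have g: "\<exists>t\<in>{a..c}. Uq t > 0" using ab by auto
        have z: "\<forall>t\<in>{a..c} - {Suc b..c}. Uq t = 0"
        proof
          fix t assume "t \<in> {a..c} - {Suc b..c}"
          then have "t \<in> {a..b}" "t \<in> {a..c}" by auto
          then show "Uq t = 0" using 2(1) nnU by (meson not_less order_antisym)
        qed
        have "opt d a c Uq \<le> opt d (Suc b) c Uq" using opt_zero_ext[of a "Suc b" c c Uq d] z ab by simp
        then show ?thesis using 2 g spl ab ac tauq unfolding h_def by simp
      next
        case 3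
        then have g: "\<exists>t\<in>{a..c}. Uq t > 0" using bc by auto
        have z: "\<forall>t\<in>{a..c} - {a..b}. Uq t = 0"
        proof
          fix t assume "t \<in> {a..c} - {a..b}"
          then have "t \<in> {Suc b..c}" "t \<in> {a..c}" by auto
          then show "Uq t = 0" using 3(2) nnU by (meson not_less order_antisym)
        qed
        have "opt d a c Uq \<le> opt d a b Uq" using opt_zero_ext[of a a b c Uq d] z bc by simp
        then show ?thesis using 3 g spl ab ac tauq unfolding h_def by simp
      qed
    qed
    have goodq: "\<exists>t\<in>{1..n}. Uq t > 0" using t1 unfolding Uq_def Uinst_def by auto
    have tr_h: "tau d L p r \<le> h L"
      if LP: "L \<in> P" and IP: "interval_partition n P" and pos: "\<exists>t\<in>L. Ur t > 0" for L P
    proof -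
      obtain a b where ab: "a \<le> b" and L: "L = {a..b}" using ip_ival[OF IP LP] by blast
      have sub: "{a..b} \<subseteq> {1..n}" using ip_sub[OF IP LP] L by simp
      have m1: "opt d a b Or \<le> opt d a b Oq" using opt_mono[OF d] pw sub by blast
      show ?thesis
      proof (cases "\<exists>t\<in>L. Uq t > 0")
        case True
        have "opt d a b Uq \<le> opt d a b Ur" using opt_mono[OF d] pw sub by blast
        then show ?thesis using True m1 tauq[OF ab] taur[OF ab] unfolding h_def L by simp
      next
        case False
        obtain t0 where "t0 \<in> {a..b}" "Ur t0 > 0" using pos L by blast
        then have "1 \<le> opt d a b Ur" using opt_ge1[OF d] pw sub by blast
        then show ?thesis using False m1 taur[OF ab] ab unfolding h_def L by simp
      qed
    qed
    have "Ur t1 > 0" using goodq t1 pw unfolding Uq_def Uinst_def Ur_def r_def by auto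
    then have ne: "{{1..n}} \<in> nonempty_partitions n Ur" using trivial_np t1(1) by blast
    have "eta d n p r \<in> (\<lambda>P. \<Sum>L\<in>P. tau d L p r) ` nonempty_partitions n (Uinst p r)"
      unfolding eta_def using finite_np ne Ur_def by (intro Max_in) auto
    then obtain P0 where P0: "P0 \<in> nonempty_partitions n Ur" and e: "eta d n p r = (\<Sum>L\<in>P0. tau d L p r)"
      unfolding Ur_def by blast
    have IP0: "interval_partition n P0" and pos0: "\<forall>L\<in>P0. \<exists>t\<in>L. Ur t > 0"
      using P0 unfolding nonempty_partitions_def by auto
    have "\<exists>P'. interval_partition n P' \<and> (\<forall>L\<in>P'. \<exists>t\<in>L. Uq t > 0) \<and> sum h P0 \<le> sum h P'"
      apply (rule partition_merge[where h=h and f=Ur and g=Uq, OF _ goodq IP0 pos0])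
      using merge by blast
    then obtain P' where P': "interval_partition n P'" "\<forall>L\<in>P'. \<exists>t\<in>L. Uq t > 0" "sum h P0 \<le> sum h P'"
      by blast
    have "eta d n p r \<le> sum h P0" unfolding e using tr_h IP0 pos0 by (intro sum_mono) auto
    also have "\<dots> \<le> sum h P'" by (rule P'(3))
    also have "\<dots> = (\<Sum>L\<in>P'. tau d L p q)" using P'(2) unfolding h_def by simp
    also have "\<dots> \<le> eta d n p q"
      by (rule eta_ge) (use P' in \<open>simp add: nonempty_partitions_def Uq_def\<close>)
    finally show ?thesis unfolding r_def .
  qed
  show ?thesis using part1 part2 by blast
qed


end
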